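(* Consider, for $i=1,2$, $a\in[0,A]$, $t\ge 0$, the age-structured predator–prey system $$\partial_t x_1(a,t)+\partial_a x_1(a,t)=-x_1(a,t)\Big[\mu_1(a)+u(t)+\int_0^A g_1(\alpha)x_2(\alpha,t)\,d\alpha\Big],$$ $$\partial_t x_2(a,t)+\partial_a x_2(a,t)=-x_2(a,t)\Big[\mu_2(a)+u(t)+\frac{1}{\int_0^A g_2(\alpha)x_1(\alpha,t)\,d\alpha}\Big],$$ $$x_i(0,t)=\int_0^A k_i(a)x_i(a,t)\,da .$$ Let $u^*\in(0,\min\{\zeta_1,\zeta_2\})$. Then the system admits, with constant input $u\equiv u^*$, a time-independent solution $(x_1^*,x_2^* )$ with positive values, given by $$x_i^*(a)=x_i^*(0)\,\tilde x_i^*(a),\qquad \tilde x_i^*(a)=e^{-\int_0^a(\zeta_i+\mu_i(s))ds},$$ $$x_1^*(0)=\frac{1}{(\zeta_2-u^* )\int_0^A g_2(a)\tilde x_1^*(a)\,da}>0,\qquad x_2^*(0)=\frac{\zeta_1-u^*}{\int_0^A g_1(a)\tilde x_2^*(a)\,da}>0,$$ and these satisfy $u^*=\zeta_1-\lambda_2=\zeta_2-\frac1{\lambda_1}$, where $\lambda_1:=\int_0^A g_2(a)x_1^*(a)\,da>0$ and $\lambda_2:=\int_0^A g_1(a)x_2^*(a)\,da>0$. Conversely, every time-independent solution $(x_1^*,x_2^* )$ with positive values corresponding to a constant input $u^*>0$ is of this form, and necessarily $u^*\in(0,\min\{\zeta_1,\zeta_2\})$.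
   Context: $A>0$ is the maximal age. For $i=1,2$, $\mu_i,k_i,g_i:[0,A]\to[0,\infty)$ are (piecewise continuous) functions with $\int_0^A\mu_i>0$, $\int_0^A k_i>0$, $\int_0^A g_i>0$ (mortality, birth and interaction kernels). $\zeta_i\in\mathbb R$ denotes the unique real number satisfying the Lotka–Sharpe condition $\int_0^A k_i(a)e^{-\int_0^a(\mu_i(s)+\zeta_i)ds}\,da=1$. *)

theory Defs
  imports "HOL-Analysis.Analysis"
begin

definition piecewise_cont :: "real \<Rightarrow> (real \<Rightarrow> real) \<Rightarrow> bool" where
  "piecewise_cont A f \<longleftrightarrow>
     (\<exists>S. finite S \<and>
        (\<forall>a\<in>{0..A} - S. continuous (at a within {0..A}) f) \<and>
        (\<forall>a\<in>S \<inter> {0..A}.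
           (a > 0 \<longrightarrow> (\<exists>l. (f \<longlongrightarrow> l) (at_left a))) \<and>
           (a < A \<longrightarrow> (\<exists>l. (f \<longlongrightarrow> l) (at_right a)))))"

text \<open>Time-independent solution (x1,x2) of the age-structured predator-prey system
  with constant input u: since the time derivative vanishes, the PDEs reduce to
  ODEs in the age variable a, which must hold at all but finitely many ages
  (the coefficients are only piecewise continuous); x1, x2 are continuous on [0,A]
  and satisfy the renewal boundary conditions.\<close>
definition steady_state ::
  "real \<Rightarrow> (real \<Rightarrow> real) \<Rightarrow> (real \<Rightarrow> real) \<Rightarrow> (real \<Rightarrow> real) \<Rightarrow> (real \<Rightarrow> real)
   \<Rightarrow> (real \<Rightarrow> real) \<Rightarrow> (real \<Rightarrow> real) \<Rightarrow> real \<Rightarrow> (real \<Rightarrow> real) \<Rightarrow> (real \<Rightarrow> real) \<Rightarrow> bool"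
  where
  "steady_state A \<mu>1 \<mu>2 k1 k2 g1 g2 u x1 x2 \<longleftrightarrow>
     continuous_on {0..A} x1 \<and> continuous_on {0..A} x2 \<and>
     (\<exists>S. finite S \<and>
        (\<forall>a\<in>{0..A} - S.
           (x1 has_real_derivative
              (- x1 a * (\<mu>1 a + u + integral {0..A} (\<lambda>\<alpha>. g1 \<alpha> * x2 \<alpha>)))) (at a within {0..A}) \<and>
           (x2 has_real_derivative
              (- x2 a * (\<mu>2 a + u + 1 / integral {0..A} (\<lambda>\<alpha>. g2 \<alpha> * x1 \<alpha>)))) (at a within {0..A}))) \<and>
     x1 0 = integral {0..A} (\<lambda>a. k1 a * x1 a) \<and>
     x2 0 = integral {0..A} (\<lambda>a. k2 a * x2 a)"

definition profile :: "(real \<Rightarrow> real) \<Rightarrow> real \<Rightarrow> real \<Rightarrow> real" where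
  "profile \<mu> \<zeta> a = exp (- integral {0..a} (\<lambda>s. \<zeta> + \<mu> s))"

end

theory Submission
  imports Defs
begin

lemma prof_split:
  assumes "\<mu> integrable_on {0..A}" "a \<in> {0..A}"
  shows "profile \<mu> c a = exp (- c * a) * exp (- integral {0..a} \<mu>)"
proof -
  have i: "\<mu> integrable_on {0..a}" using assms integrable_subinterval_real by fastforce
  have "integral {0..a} (\<lambda>s. c + \<mu> s) = c * a + integral {0..a} \<mu>"
    using i assms by (simp add: integral_add integrable_const_ivl)
  then show ?thesis unfolding profile_def by (simp add: exp_add[symmetric])
qed

lemma prof_cont:
  assumes "\<mu> integrable_on {0..A}"
  shows "continuous_on {0..A} (profile \<mu> c)"
proof -
  have "(\<lambda>s. c + \<mu> s) integrable_on {0..A}" using assms by (intro integrable_add integrable_const_ivl assms(1))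
  from indefinite_integral_continuous_1[OF this] show ?thesis
    unfolding profile_def[abs_def] by (intro continuous_intros)
qed

lemma prof_deriv:
  assumes "\<mu> integrable_on {0..A}" "a \<in> {0..A}" "continuous (at a within {0..A}) \<mu>"
  shows "(profile \<mu> c has_real_derivative (- (c + \<mu> a)) * profile \<mu> c a) (at a within {0..A})"
proof -
  have i: "(\<lambda>s. c + \<mu> s) integrable_on {0..A}" using assms by (intro integrable_add integrable_const_ivl assms(1))
  have "continuous (at a within {0..A} - {}) (\<lambda>s. c + \<mu> s)" using assms(3) by (simp add: continuous_intros)
  from integral_has_vector_derivative_continuous_at[OF i _ _ this] assms(2)
  have d: "((\<lambda>u. integral {0..u} (\<lambda>s. c + \<mu> s)) has_real_derivative (c + \<mu> a)) (at a within {0..A})"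
    by (simp add: has_real_derivative_iff_has_vector_derivative)
  have "((\<lambda>u. exp (- integral {0..u} (\<lambda>s. c + \<mu> s))) has_real_derivative
      exp (- integral {0..a} (\<lambda>s. c + \<mu> s)) * (- (c + \<mu> a))) (at a within {0..A})"
    by (rule derivative_eq_intros d refl)+
  then show ?thesis unfolding profile_def[abs_def] by (simp add: mult.commute)
qed

lemma prod_int:
  fixes k h :: "real \<Rightarrow> real"
  assumes "k integrable_on {0..A}" "\<And>a. a \<in> {0..A} \<Longrightarrow> k a \<ge> 0" "continuous_on {0..A} h"
  shows "(\<lambda>a. k a * h a) integrable_on {0..A}"
proof -
  have ka: "k absolutely_integrable_on {0..A}"
    unfolding absolutely_integrable_on_def
    using assms(1) by (auto intro: integrable_eq[OF assms(1)] simp: assms(2))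
  have "(\<lambda>a. h a * k a) absolutely_integrable_on {0..A}"
    by (rule absolutely_integrable_bounded_measurable_product_real[OF
        continuous_imp_measurable_on_sets_lebesgue[OF assms(3)] _ _ ka])
       (auto intro: compact_imp_bounded compact_continuous_image assms(3))
  then show ?thesis unfolding absolutely_integrable_on_def by (simp add: mult.commute)
qed

lemma nonneg_int0:
  fixes f :: "real \<Rightarrow> real"
  assumes "f integrable_on S" "\<And>x. x \<in> S \<Longrightarrow> 0 \<le> f x" "integral S f = 0" "S \<in> sets lebesgue"
  shows "negligible {x\<in>S. f x \<noteq> 0}"
proof -
  have af: "f absolutely_integrable_on S"
    using assms by (intro absolutely_integrable_onI assms(1) integrable_eq[OF assms(1)]) simp
  then have "integral S f = set_lebesgue_integral lebesgue S f"
    by (intro set_lebesgue_integral_eq_integral(2)[symmetric])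
  then have "integral\<^sup>L lebesgue (\<lambda>x. indicator S x *\<^sub>R f x) = 0"
    using assms(3) unfolding set_lebesgue_integral_def by simp
  moreover have "integral\<^sup>L lebesgue (\<lambda>x. indicator S x *\<^sub>R f x) = 0 \<longleftrightarrow> (AE x in lebesgue. indicator S x *\<^sub>R f x = 0)"
  proof (rule integral_nonneg_eq_0_iff_AE)
    show "integrable lebesgue (\<lambda>x. indicat_real S x *\<^sub>R f x)"
      by (metis af set_integrable_def)
  qed (use assms(2) in \<open>auto simp: indicator_def\<close>)
  ultimately have "AE x in lebesgue. indicator S x *\<^sub>R f x = 0" by simp
  then obtain N where N: "{x \<in> space lebesgue. \<not> indicator S x *\<^sub>R f x = 0} \<subseteq> N" "emeasure lebesgue N = 0" "N \<in> sets lebesgue"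
    by (rule AE_E)
  then have "N \<in> null_sets lebesgue" by auto
  then have "negligible N" by (simp add: negligible_iff_null_sets)
  moreover have "{x\<in>S. f x \<noteq> 0} \<subseteq> N" using N(1) by (auto simp: indicator_def)
  ultimately show ?thesis by (rule negligible_subset)
qed

lemma pos_int:
  fixes k w :: "real \<Rightarrow> real"
  assumes "k integrable_on {0..A}" "\<And>a. a \<in> {0..A} \<Longrightarrow> k a \<ge> 0" "integral {0..A} k > 0"
    "continuous_on {0..A} w" "\<And>a. a \<in> {0..A} \<Longrightarrow> w a \<ge> 0" "\<And>a. a \<in> {0..A} \<Longrightarrow> a \<noteq> 0 \<Longrightarrow> w a > 0"
  shows "integral {0..A} (\<lambda>a. k a * w a) > 0"
proof -
  have i: "(\<lambda>a. k a * w a) integrable_on {0..A}" by (rule prod_int[OF assms(1,2,4)])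
  have ge: "integral {0..A} (\<lambda>a. k a * w a) \<ge> 0"
    using assms(2,5) by (intro integral_nonneg i) auto
  show ?thesis
  proof (rule ccontr)
    assume "\<not> ?thesis"
    with ge have "integral {0..A} (\<lambda>a. k a * w a) = 0" by simp
    from nonneg_int0[OF i _ this] assms(2,5)
    have n: "negligible {x\<in>{0..A}. k x * w x \<noteq> 0}" by auto
    have "negligible ({x\<in>{0..A}. k x * w x \<noteq> 0} \<union> {0})" using n by simp
    then have "integral {0..A} k = integral {0..A} (\<lambda>_. 0::real)"
    proof (rule integral_spike)
      fix x assume "x \<in> {0..A} - ({x \<in> {0..A}. k x * w x \<noteq> 0} \<union> {0})"
      then show "0 = k x" using assms(6)[of x] by auto
    qed
    with assms(3) show False by simp
  qed
qed

lemma prof_pos: "profile \<mu> c a > 0" by (simp add: profile_def)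

lemma prof0: "profile \<mu> c 0 = 1" by (simp add: profile_def)

lemma uniq:
  fixes k \<mu> :: "real \<Rightarrow> real"
  assumes "k integrable_on {0..A}" "\<And>a. a \<in> {0..A} \<Longrightarrow> k a \<ge> 0" "integral {0..A} k > 0"
    "\<mu> integrable_on {0..A}"
    "integral {0..A} (\<lambda>a. k a * profile \<mu> c a) = integral {0..A} (\<lambda>a. k a * profile \<mu> d a)"
  shows "c = d"
proof -
  have *: False if cd: "c < d" and eq: "integral {0..A} (\<lambda>a. k a * profile \<mu> c a) = integral {0..A} (\<lambda>a. k a * profile \<mu> d a)" for c d
  proof -
    let ?w = "\<lambda>a. profile \<mu> c a - profile \<mu> d a"
    have ic: "(\<lambda>a. k a * profile \<mu> c a) integrable_on {0..A}" by (intro prod_int assms prof_cont)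
    have id: "(\<lambda>a. k a * profile \<mu> d a) integrable_on {0..A}" by (intro prod_int assms prof_cont)
    have wpos: "?w a > 0" if "a \<in> {0..A}" "a \<noteq> 0" for a
    proof -
      have "- d * a < - c * a" using that cd by auto
      then have "exp (- d * a) < exp (- c * a)" by simp
      then show ?thesis using prof_split[OF assms(4) that(1)] by simp
    qed
    have wnn: "?w a \<ge> 0" if "a \<in> {0..A}" for a
      using wpos[OF that] by (cases "a = 0") (auto simp: prof0)
    have "integral {0..A} (\<lambda>a. k a * ?w a) > 0"
      using wpos wnn by (intro pos_int assms continuous_on_diff prof_cont) auto
    moreover have "integral {0..A} (\<lambda>a. k a * ?w a) = integral {0..A} (\<lambda>a. k a * profile \<mu> c a) - integral {0..A} (\<lambda>a. k a * profile \<mu> d a)"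
      using integral_diff[OF ic id] by (simp add: right_diff_distrib)
    ultimately show False using eq by simp
  qed
  show ?thesis using *[of c d] *[of d c] assms(5) by (cases c d rule: linorder_cases) auto
qed

lemma LS_prof: "(\<lambda>a. k a * exp (- integral {0..a} (\<lambda>s. \<mu> s + z))) = (\<lambda>a. k a * profile \<mu> z a)"
  unfolding profile_def by (simp add: add.commute)

lemma pc_cont:
  assumes "piecewise_cont A f"
  obtains S where "finite S" "\<And>a. a \<in> {0..A} - S \<Longrightarrow> continuous (at a within {0..A}) f"
  using assms unfolding piecewise_cont_def by blast

lemma int_of_pos: "integral S f > (0::real) \<Longrightarrow> f integrable_on S"
  using not_integrable_integral by fastforce

lemma ode_sol:
  assumes "\<mu> integrable_on {0..A}" "finite S" "\<And>a. a \<in> {0..A} - S \<Longrightarrow> continuous (at a within {0..A}) \<mu>"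
    "finite T" "continuous_on {0..A} x"
    "\<And>a. a \<in> {0..A} - T \<Longrightarrow> (x has_real_derivative - x a * (\<mu> a + c)) (at a within {0..A})"
    "b \<in> {0..A}"
  shows "x b = x 0 * profile \<mu> c b"
proof -
  let ?h = "\<lambda>a. x a / profile \<mu> c a"
  have "?h b = x 0"
  proof (rule has_derivative_zero_unique_strong_interval[of "S \<union> T" 0 A ?h "x 0" b])
    show "finite (S \<union> T)" using assms by simp
    show "continuous_on {0..A} ?h"
      by (intro continuous_on_divide assms prof_cont) (simp add: prof_pos[THEN less_imp_neq, symmetric])
    show "?h 0 = x 0" by (simp add: prof0)
    show "b \<in> {0..A}" by fact
  next
    fix a assume a: "a \<in> {0..A} - (S \<union> T)"
    have "(?h has_real_derivative ((- x a * (\<mu> a + c)) * profile \<mu> c a - x a * (- (c + \<mu> a) * profile \<mu> c a)) / (profile \<mu> c a * profile \<mu> c a)) (at a within {0..A})"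
      using a by (intro DERIV_divide assms(6) prof_deriv assms(1) assms(3)) (auto simp: prof_pos[THEN less_imp_neq, symmetric])
    moreover have "((- x a * (\<mu> a + c)) * profile \<mu> c a - x a * (- (c + \<mu> a) * profile \<mu> c a)) = 0"
      by (simp add: algebra_simps)
    ultimately have "(?h has_real_derivative 0) (at a within {0..A})" by simp
    moreover have z: "((*) (0::real)) = (\<lambda>h. 0)" by auto
    ultimately show "(?h has_derivative (\<lambda>h. 0)) (at a within {0..A})"
      by (simp add: has_field_derivative_def)
  qed
  then show ?thesis using prof_pos[of \<mu> c b] by (simp add: field_simps)
qed

theorem proposition1:
  fixes A \<zeta>1 \<zeta>2 :: real and \<mu>1 \<mu>2 k1 k2 g1 g2 :: "real \<Rightarrow> real"
  assumes A: "A > 0"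
    and pc: "piecewise_cont A \<mu>1" "piecewise_cont A \<mu>2" "piecewise_cont A k1"
            "piecewise_cont A k2" "piecewise_cont A g1" "piecewise_cont A g2"
    and nn: "\<forall>a\<in>{0..A}. \<mu>1 a \<ge> 0 \<and> \<mu>2 a \<ge> 0 \<and> k1 a \<ge> 0 \<and> k2 a \<ge> 0 \<and> g1 a \<ge> 0 \<and> g2 a \<ge> 0"
    and pos: "integral {0..A} \<mu>1 > 0" "integral {0..A} \<mu>2 > 0"
             "integral {0..A} k1 > 0" "integral {0..A} k2 > 0"
             "integral {0..A} g1 > 0" "integral {0..A} g2 > 0"
    and LS1: "integral {0..A} (\<lambda>a. k1 a * exp (- integral {0..a} (\<lambda>s. \<mu>1 s + \<zeta>1))) = 1"
    and LS2: "integral {0..A} (\<lambda>a. k2 a * exp (- integral {0..a} (\<lambda>s. \<mu>2 s + \<zeta>2))) = 1"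
  shows
    "(\<forall>u. 0 < u \<and> u < min \<zeta>1 \<zeta>2 \<longrightarrow>
        (let x10 = 1 / ((\<zeta>2 - u) * integral {0..A} (\<lambda>a. g2 a * profile \<mu>1 \<zeta>1 a));
             x20 = (\<zeta>1 - u) / integral {0..A} (\<lambda>a. g1 a * profile \<mu>2 \<zeta>2 a);
             x1 = (\<lambda>a. x10 * profile \<mu>1 \<zeta>1 a);
             x2 = (\<lambda>a. x20 * profile \<mu>2 \<zeta>2 a);
             lam1 = integral {0..A} (\<lambda>a. g2 a * x1 a);
             lam2 = integral {0..A} (\<lambda>a. g1 a * x2 a)
         in x10 > 0 \<and> x20 > 0 \<and>
            steady_state A \<mu>1 \<mu>2 k1 k2 g1 g2 u x1 x2 \<and>
            (\<forall>a\<in>{0..A}. x1 a > 0 \<and> x2 a > 0) \<and>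
            lam1 > 0 \<and> lam2 > 0 \<and> u = \<zeta>1 - lam2 \<and> u = \<zeta>2 - 1 / lam1))
     \<and>
     (\<forall>u x1 x2. u > 0 \<and> steady_state A \<mu>1 \<mu>2 k1 k2 g1 g2 u x1 x2 \<and>
        (\<forall>a\<in>{0..A}. x1 a > 0 \<and> x2 a > 0) \<longrightarrow>
        u < min \<zeta>1 \<zeta>2 \<and>
        (\<forall>a\<in>{0..A}.
           x1 a = 1 / ((\<zeta>2 - u) * integral {0..A} (\<lambda>a. g2 a * profile \<mu>1 \<zeta>1 a)) * profile \<mu>1 \<zeta>1 a \<and>
           x2 a = (\<zeta>1 - u) / integral {0..A} (\<lambda>a. g1 a * profile \<mu>2 \<zeta>2 a) * profile \<mu>2 \<zeta>2 a))"
proof -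
  have i\<mu>1: "\<mu>1 integrable_on {0..A}" using pos(1) by (rule int_of_pos)
  have i\<mu>2: "\<mu>2 integrable_on {0..A}" using pos(2) by (rule int_of_pos)
  have ik1: "k1 integrable_on {0..A}" using pos(3) by (rule int_of_pos)
  have ik2: "k2 integrable_on {0..A}" using pos(4) by (rule int_of_pos)
  have ig1: "g1 integrable_on {0..A}" using pos(5) by (rule int_of_pos)
  have ig2: "g2 integrable_on {0..A}" using pos(6) by (rule int_of_pos)
  have nk1: "\<And>a. a \<in> {0..A} \<Longrightarrow> k1 a \<ge> 0" and nk2: "\<And>a. a \<in> {0..A} \<Longrightarrow> k2 a \<ge> 0"
    and ng1: "\<And>a. a \<in> {0..A} \<Longrightarrow> g1 a \<ge> 0" and ng2: "\<And>a. a \<in> {0..A} \<Longrightarrow> g2 a \<ge> 0"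
    using nn by auto
  obtain S1 where S1: "finite S1" "\<And>a. a \<in> {0..A} - S1 \<Longrightarrow> continuous (at a within {0..A}) \<mu>1"
    using pc_cont[OF pc(1)] by blast
  obtain S2 where S2: "finite S2" "\<And>a. a \<in> {0..A} - S2 \<Longrightarrow> continuous (at a within {0..A}) \<mu>2"
    using pc_cont[OF pc(2)] by blast
  have LS1': "integral {0..A} (\<lambda>a. k1 a * profile \<mu>1 \<zeta>1 a) = 1" using LS1 by (simp only: LS_prof)
  have LS2': "integral {0..A} (\<lambda>a. k2 a * profile \<mu>2 \<zeta>2 a) = 1" using LS2 by (simp only: LS_prof)
  define I1 where "I1 = integral {0..A} (\<lambda>a. g2 a * profile \<mu>1 \<zeta>1 a)"
  define I2 where "I2 = integral {0..A} (\<lambda>a. g1 a * profile \<mu>2 \<zeta>2 a)"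
  have I1pos: "I1 > 0" unfolding I1_def
    by (intro pos_int ig2 ng2 pos(6) prof_cont i\<mu>1 less_imp_le[OF prof_pos] prof_pos)
  have I2pos: "I2 > 0" unfolding I2_def
    by (intro pos_int ig1 ng1 pos(5) prof_cont i\<mu>2 less_imp_le[OF prof_pos] prof_pos)
  have intc: "integral {0..A} (\<lambda>a. g a * (c * profile \<mu> z a)) = c * integral {0..A} (\<lambda>a. g a * profile \<mu> z a)"
    for g \<mu> z and c :: real
    using integral_cmul[where c=c and S="{0..A}" and f="\<lambda>a. g a * profile \<mu> z a"] by (simp add: algebra_simps)
  show ?thesis
  proof (rule conjI; intro allI impI)
    fix u assume u: "0 < u \<and> u < min \<zeta>1 \<zeta>2"
    define x10 where "x10 = 1 / ((\<zeta>2 - u) * I1)"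
    define x20 where "x20 = (\<zeta>1 - u) / I2"
    define x1 where "x1 = (\<lambda>a. x10 * profile \<mu>1 \<zeta>1 a)"
    define x2 where "x2 = (\<lambda>a. x20 * profile \<mu>2 \<zeta>2 a)"
    have x10: "x10 > 0" using u I1pos by (simp add: x10_def)
    have x20: "x20 > 0" using u I2pos by (simp add: x20_def)
    have lam1: "integral {0..A} (\<lambda>a. g2 a * x1 a) = 1 / (\<zeta>2 - u)"
      using I1pos unfolding x1_def intc by (simp add: x10_def I1_def[symmetric])
    have lam2: "integral {0..A} (\<lambda>a. g1 a * x2 a) = \<zeta>1 - u"
      using I2pos unfolding x2_def intc by (simp add: x20_def I2_def[symmetric])
    have ss: "steady_state A \<mu>1 \<mu>2 k1 k2 g1 g2 u x1 x2"
      unfolding steady_state_def lam1 lam2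
    proof (intro conjI exI[of _ "S1 \<union> S2"] ballI)
      show "continuous_on {0..A} x1" unfolding x1_def by (intro continuous_intros prof_cont i\<mu>1)
      show "continuous_on {0..A} x2" unfolding x2_def by (intro continuous_intros prof_cont i\<mu>2)
      show "finite (S1 \<union> S2)" using S1 S2 by simp
    next
      fix a assume a: "a \<in> {0..A} - (S1 \<union> S2)"
      have "(x1 has_real_derivative x10 * (- (\<zeta>1 + \<mu>1 a) * profile \<mu>1 \<zeta>1 a)) (at a within {0..A})"
        unfolding x1_def using a by (intro DERIV_cmult prof_deriv i\<mu>1 S1(2)) auto
      moreover have "x10 * (- (\<zeta>1 + \<mu>1 a) * profile \<mu>1 \<zeta>1 a) = - x1 a * (\<mu>1 a + u + (\<zeta>1 - u))"
        by (simp add: x1_def algebra_simps)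
      ultimately show "(x1 has_real_derivative - x1 a * (\<mu>1 a + u + (\<zeta>1 - u))) (at a within {0..A})"
        by simp
    next
      fix a assume a: "a \<in> {0..A} - (S1 \<union> S2)"
      have "(x2 has_real_derivative x20 * (- (\<zeta>2 + \<mu>2 a) * profile \<mu>2 \<zeta>2 a)) (at a within {0..A})"
        unfolding x2_def using a by (intro DERIV_cmult prof_deriv i\<mu>2 S2(2)) auto
      moreover have "x20 * (- (\<zeta>2 + \<mu>2 a) * profile \<mu>2 \<zeta>2 a) = - x2 a * (\<mu>2 a + u + 1 / (1 / (\<zeta>2 - u)))"
        by (simp add: x2_def algebra_simps)
      ultimately show "(x2 has_real_derivative - x2 a * (\<mu>2 a + u + 1 / (1 / (\<zeta>2 - u)))) (at a within {0..A})"
        by simp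
    next
      show "x1 0 = integral {0..A} (\<lambda>a. k1 a * x1 a)"
        unfolding x1_def intc LS1' by (simp add: prof0)
      show "x2 0 = integral {0..A} (\<lambda>a. k2 a * x2 a)"
        unfolding x2_def intc LS2' by (simp add: prof0)
    qed
    have main: "x10 > 0 \<and> x20 > 0 \<and> steady_state A \<mu>1 \<mu>2 k1 k2 g1 g2 u x1 x2 \<and>
            (\<forall>a\<in>{0..A}. x1 a > 0 \<and> x2 a > 0) \<and>
            integral {0..A} (\<lambda>a. g2 a * x1 a) > 0 \<and> integral {0..A} (\<lambda>a. g1 a * x2 a) > 0 \<and>
            u = \<zeta>1 - integral {0..A} (\<lambda>a. g1 a * x2 a) \<and> u = \<zeta>2 - 1 / integral {0..A} (\<lambda>a. g2 a * x1 a)"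
      using x10 x20 ss u unfolding lam1 lam2 by (auto simp: x1_def x2_def prof_pos)
    then show "let x10 = 1 / ((\<zeta>2 - u) * integral {0..A} (\<lambda>a. g2 a * profile \<mu>1 \<zeta>1 a));
             x20 = (\<zeta>1 - u) / integral {0..A} (\<lambda>a. g1 a * profile \<mu>2 \<zeta>2 a);
             x1 = (\<lambda>a. x10 * profile \<mu>1 \<zeta>1 a);
             x2 = (\<lambda>a. x20 * profile \<mu>2 \<zeta>2 a);
             lam1 = integral {0..A} (\<lambda>a. g2 a * x1 a);
             lam2 = integral {0..A} (\<lambda>a. g1 a * x2 a)
         in x10 > 0 \<and> x20 > 0 \<and>
            steady_state A \<mu>1 \<mu>2 k1 k2 g1 g2 u x1 x2 \<and>
            (\<forall>a\<in>{0..A}. x1 a > 0 \<and> x2 a > 0) \<and>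
            lam1 > 0 \<and> lam2 > 0 \<and> u = \<zeta>1 - lam2 \<and> u = \<zeta>2 - 1 / lam1"
      unfolding Let_def x1_def x2_def x10_def x20_def I1_def I2_def .
  next
    fix u x1 x2
    assume H: "u > 0 \<and> steady_state A \<mu>1 \<mu>2 k1 k2 g1 g2 u x1 x2 \<and> (\<forall>a\<in>{0..A}. x1 a > 0 \<and> x2 a > 0)"
    have u: "u > 0" and ss: "steady_state A \<mu>1 \<mu>2 k1 k2 g1 g2 u x1 x2"
      and xp: "\<And>a. a \<in> {0..A} \<Longrightarrow> x1 a > 0" "\<And>a. a \<in> {0..A} \<Longrightarrow> x2 a > 0" using H by auto
    define l1 where "l1 = integral {0..A} (\<lambda>\<alpha>. g2 \<alpha> * x1 \<alpha>)"
    define l2 where "l2 = integral {0..A} (\<lambda>\<alpha>. g1 \<alpha> * x2 \<alpha>)"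
    obtain S where S: "finite S"
      and d1: "\<And>a. a \<in> {0..A} - S \<Longrightarrow> (x1 has_real_derivative (- x1 a * (\<mu>1 a + u + l2))) (at a within {0..A})"
      and d2: "\<And>a. a \<in> {0..A} - S \<Longrightarrow> (x2 has_real_derivative (- x2 a * (\<mu>2 a + u + 1 / l1))) (at a within {0..A})"
      using ss unfolding steady_state_def l1_def l2_def by blast
    have c1: "continuous_on {0..A} x1" and c2: "continuous_on {0..A} x2"
      and b1: "x1 0 = integral {0..A} (\<lambda>a. k1 a * x1 a)"
      and b2: "x2 0 = integral {0..A} (\<lambda>a. k2 a * x2 a)"
      using ss unfolding steady_state_def by auto
    have A0: "0 \<in> {0..A}" using A by simp
    have dd: "(x1 has_real_derivative - x1 a * (\<mu>1 a + (u + l2))) (at a within {0..A})" if "a \<in> {0..A} - S" for a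
      using d1[OF that] by (simp add: add.assoc)
    obtain p1 where p1: "x1 0 = p1" by simp
    obtain p2 where p2: "x2 0 = p2" by simp
    have e1: "x1 a = p1 * profile \<mu>1 (u + l2) a" if "a \<in> {0..A}" for a
      unfolding p1[symmetric] by (rule ode_sol[OF i\<mu>1 S1 S c1 dd that])
    have dd2: "(x2 has_real_derivative - x2 a * (\<mu>2 a + (u + 1 / l1))) (at a within {0..A})" if "a \<in> {0..A} - S" for a
      using d2[OF that] by (simp add: add.assoc)
    have e2: "x2 a = p2 * profile \<mu>2 (u + 1 / l1) a" if "a \<in> {0..A}" for a
      unfolding p2[symmetric] by (rule ode_sol[OF i\<mu>2 S2 S c2 dd2 that])
    have "integral {0..A} (\<lambda>a. k1 a * x1 a) = integral {0..A} (\<lambda>a. k1 a * (p1 * profile \<mu>1 (u + l2) a))"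
      using e1 by (intro integral_cong) simp
    then have "p1 = p1 * integral {0..A} (\<lambda>a. k1 a * profile \<mu>1 (u + l2) a)"
      using b1 p1 by (simp only: intc)
    then have "integral {0..A} (\<lambda>a. k1 a * profile \<mu>1 (u + l2) a) = integral {0..A} (\<lambda>a. k1 a * profile \<mu>1 \<zeta>1 a)"
      using xp(1)[OF A0] p1 LS1' by simp
    then have z1: "u + l2 = \<zeta>1" using uniq[OF ik1 nk1 pos(3) i\<mu>1] by blast
    have "integral {0..A} (\<lambda>a. k2 a * x2 a) = integral {0..A} (\<lambda>a. k2 a * (p2 * profile \<mu>2 (u + 1 / l1) a))"
      using e2 by (intro integral_cong) simp
    then have "p2 = p2 * integral {0..A} (\<lambda>a. k2 a * profile \<mu>2 (u + 1 / l1) a)"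
      using b2 p2 by (simp only: intc)
    then have "integral {0..A} (\<lambda>a. k2 a * profile \<mu>2 (u + 1 / l1) a) = integral {0..A} (\<lambda>a. k2 a * profile \<mu>2 \<zeta>2 a)"
      using xp(2)[OF A0] p2 LS2' by simp
    then have z2: "u + 1 / l1 = \<zeta>2" using uniq[OF ik2 nk2 pos(4) i\<mu>2] by blast
    have l1p: "l1 > 0" unfolding l1_def
      using xp(1) by (intro pos_int ig2 ng2 pos(6) c1) (auto simp: less_imp_le)
    have l2p: "l2 > 0" unfolding l2_def
      using xp(2) by (intro pos_int ig1 ng1 pos(5) c2) (auto simp: less_imp_le)
    have "l1 = integral {0..A} (\<lambda>a. g2 a * (p1 * profile \<mu>1 \<zeta>1 a))"
      unfolding l1_def using e1 z1 by (intro integral_cong) simp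
    then have l1e: "l1 = p1 * I1" unfolding I1_def by (simp only: intc)
    have "l2 = integral {0..A} (\<lambda>a. g1 a * (p2 * profile \<mu>2 \<zeta>2 a))"
      unfolding l2_def using e2 z2 by (intro integral_cong) simp
    then have l2e: "l2 = p2 * I2" unfolding I2_def by (simp only: intc)
    have f1: "1 / ((\<zeta>2 - u) * I1) = p1" using z2 l1e l1p I1pos by (auto simp: field_simps)
    have f2: "(\<zeta>1 - u) / I2 = p2" using z1 l2e I2pos by (auto simp: field_simps)
    have fin1: "\<forall>a\<in>{0..A}. x1 a = p1 * profile \<mu>1 \<zeta>1 a" using e1 z1 by simp
    have fin2: "\<forall>a\<in>{0..A}. x2 a = p2 * profile \<mu>2 \<zeta>2 a" using e2 z2 by simp
    show "u < min \<zeta>1 \<zeta>2 \<and>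
        (\<forall>a\<in>{0..A}.
           x1 a = 1 / ((\<zeta>2 - u) * integral {0..A} (\<lambda>a. g2 a * profile \<mu>1 \<zeta>1 a)) * profile \<mu>1 \<zeta>1 a \<and>
           x2 a = (\<zeta>1 - u) / integral {0..A} (\<lambda>a. g1 a * profile \<mu>2 \<zeta>2 a) * profile \<mu>2 \<zeta>2 a)"
      unfolding I1_def[symmetric] I2_def[symmetric] f1 f2
      using fin1 fin2 z1 z2 l1p l2p by auto
  qed
qed

end
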